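(* In the setting described in the context, the convex program $$\min_{q\in\mathbb R^{\mathcal V}}\ \sum_{v\in\mathcal V}-p_v\log q_v\quad\text{s.t.}\quad q\ge\mathbf 0,\ Mq\le\mathbf 1$$ has a minimizer $q^*$, and there is a soft classifier $h^*$ with $q^{h^*}_v\ge q^*_v$ for all $v\in\mathcal V$ such that $$\mathbb E_{(x,y)\sim P}\big[\tilde\ell(h^*,(x,y))\big]=\sum_{v\in\mathcal V}-p_v\log q^*_v\le \mathbb E_{(x,y)\sim P}\big[\tilde\ell(h,(x,y))\big]$$ for every soft classifier $h$.
   Context: Let $\mathcal X$ be a set and $\mathcal Y=\{-1,1\}$. Let $P$ be a probability distribution on $\mathcal X\times\mathcal Y$ with finite support $\mathcal V$, and write $p_v=P(\{v\})>0$ for $v\in\mathcal V$. Let $N$ assign to each $x\in\mathcal X$ a nonempty set $N(x)\subseteq\mathcal X$; for $v=(x,y)$ write $N(v)=N(x)$. A soft classifier is any function $h:\mathcal X\to[0,1]^{\mathcal Y}$ with $h(x)_1+h(x)_{-1}=1$ for all $x$. The conflict graph is the bipartite graph with vertex set $\mathcal V$, parts $\mathcal V_c=\mathcal V\cap(\mathcal X\times\{c\})$ for $c\in\{1,-1\}$, and edge set $\mathcal E$ consisting of the pairs $(u,v)\in\mathcal V_1\times\mathcal V_{-1}$ with $N(u)\cap N(v)\neq\emptyset$. Let $E\in\mathbb R^{\mathcal E\times\mathcal V}$ be its edge incidence matrix ($E_{e,w}=1$ if $w$ is an endpoint of $e$, else $0$), and $M=\begin{pmatrix}E\\ I\end{pmatrix}\in\mathbb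 R^{(\mathcal E\sqcup\mathcal V)\times\mathcal V}$. For a soft classifier $h$ and $v=(x,y)\in\mathcal V$, $q^h_v=\inf_{\tilde x\in N(x)}h(\tilde x)_y$. The robust cross-entropy loss of $h$ at $(x,y)$ is $\tilde\ell(h,(x,y))=\sup_{\tilde x\in N(x)}\big(-\log h(\tilde x)_y\big)$, with $-\log 0=+\infty$; $\log$ of $0$ in the objective is $-\infty$. *)

theory Defs
  imports "HOL-Probability.Probability"
begin

text \<open>Labels are the integers -1 and 1. A data point is a pair (x,y).
  A soft classifier is h :: 'x => int => real; only the coordinates
  y = 1 and y = -1 are meaningful.\<close>

definition soft_classifier :: "('x \<Rightarrow> int \<Rightarrow> real) \<Rightarrow> bool" where
  "soft_classifier h \<longleftrightarrow>
     (\<forall>x. h x 1 \<in> {0..1} \<and> h x (-1) \<in> {0..1} \<and> h x 1 + h x (-1) = 1)"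

definition neglog :: "real \<Rightarrow> ereal" where
  "neglog t = (if t \<le> 0 then \<infinity> else ereal (- ln t))"

definition rloss :: "('x \<Rightarrow> 'x set) \<Rightarrow> ('x \<Rightarrow> int \<Rightarrow> real) \<Rightarrow> 'x \<times> int \<Rightarrow> ereal" where
  "rloss N h v = (SUP x'\<in>N (fst v). neglog (h x' (snd v)))"

definition expected_rloss ::
  "('x \<times> int) pmf \<Rightarrow> ('x \<Rightarrow> 'x set) \<Rightarrow> ('x \<Rightarrow> int \<Rightarrow> real) \<Rightarrow> ereal" where
  "expected_rloss P N h = (\<Sum>v\<in>set_pmf P. ereal (pmf P v) * rloss N h v)"

definition qh :: "('x \<Rightarrow> 'x set) \<Rightarrow> ('x \<Rightarrow> int \<Rightarrow> real) \<Rightarrow> 'x \<times> int \<Rightarrow> real" where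
  "qh N h v = (INF x'\<in>N (fst v). h x' (snd v))"

definition conflict_edges ::
  "('x \<times> int) set \<Rightarrow> ('x \<Rightarrow> 'x set) \<Rightarrow> (('x \<times> int) \<times> ('x \<times> int)) set" where
  "conflict_edges V N = {(u, v). u \<in> V \<and> v \<in> V \<and> snd u = 1 \<and> snd v = -1 \<and>
                                  N (fst u) \<inter> N (fst v) \<noteq> {}}"

definition incidence :: "(('x \<times> int) \<times> ('x \<times> int)) \<Rightarrow> ('x \<times> int) \<Rightarrow> real" where
  "incidence e w = (if w = fst e \<or> w = snd e then 1 else 0)"

text \<open>M = (E; I), rows indexed by the disjoint union of edges (Inl) and vertices (Inr).\<close>
definition Mmat :: "(('x \<times> int) \<times> ('x \<times> int)) + ('x \<times> int) \<Rightarrow> ('x \<times> int) \<Rightarrow> real" where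
  "Mmat r w = (case r of Inl e \<Rightarrow> incidence e w | Inr u \<Rightarrow> (if u = w then 1 else 0))"

definition M_rows :: "('x \<times> int) set \<Rightarrow> ('x \<Rightarrow> 'x set) \<Rightarrow>
    ((('x \<times> int) \<times> ('x \<times> int)) + ('x \<times> int)) set" where
  "M_rows V N = Inl ` conflict_edges V N \<union> Inr ` V"

text \<open>Feasible set of the convex program: q >= 0 and M q <= 1 (q in R^V, values
  outside V are irrelevant).\<close>
definition feasible :: "('x \<times> int) set \<Rightarrow> ('x \<Rightarrow> 'x set) \<Rightarrow> ('x \<times> int \<Rightarrow> real) \<Rightarrow> bool" where
  "feasible V N q \<longleftrightarrow> (\<forall>v\<in>V. 0 \<le> q v) \<and>
     (\<forall>r\<in>M_rows V N. (\<Sum>w\<in>V. Mmat r w * q w) \<le> 1)"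

definition objective :: "('x \<times> int) pmf \<Rightarrow> ('x \<times> int \<Rightarrow> real) \<Rightarrow> ereal" where
  "objective P q = (\<Sum>v\<in>set_pmf P. ereal (pmf P v) * neglog (q v))"

end

theory Submission
  imports Defs
begin

lemma neglog_nonneg: "t \<le> 1 \<Longrightarrow> 0 \<le> neglog t"
  by (simp add: neglog_def)

lemma neglog_antimono: "a \<le> b \<Longrightarrow> neglog b \<le> neglog a"
  by (auto simp: neglog_def)

lemma neglog_pos: "0 < t \<Longrightarrow> neglog t = ereal (- ln t)"
  by (simp add: neglog_def)

lemma feasible_iff:
  assumes fin: "finite V" and lab: "V \<subseteq> UNIV \<times> {-1, 1}"
  shows "feasible V N q \<longleftrightarrow> (\<forall>v\<in>V. 0 \<le> q v) \<and> (\<forall>v\<in>V. q v \<le> 1) \<and>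
     (\<forall>u w. (u, w) \<in> conflict_edges V N \<longrightarrow> q u + q w \<le> 1)"
proof -
  have inr: "(\<Sum>w\<in>V. Mmat (Inr u) w * q w) = q u" if "u \<in> V" for u
  proof -
    have "(\<Sum>w\<in>V. Mmat (Inr u) w * q w) = (\<Sum>w\<in>V. if u = w then q w else 0)"
      by (rule sum.cong) (auto simp: Mmat_def)
    also have "\<dots> = q u" using fin that by simp
    finally show ?thesis .
  qed
  have inl: "(\<Sum>w\<in>V. Mmat (Inl (u, v)) w * q w) = q u + q v"
    if "(u, v) \<in> conflict_edges V N" for u v
  proof -
    from that have uv: "u \<in> V" "v \<in> V" "u \<noteq> v" by (auto simp: conflict_edges_def)
    have "(\<Sum>w\<in>V. Mmat (Inl (u, v)) w * q w) =
          (\<Sum>w\<in>V. (if u = w then q w else 0) + (if v = w then q w else 0))"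
      by (rule sum.cong) (use uv in \<open>auto simp: Mmat_def incidence_def\<close>)
    also have "\<dots> = q u + q v" using fin uv by (simp add: sum.distrib)
    finally show ?thesis .
  qed
  have a: "(\<forall>r\<in>Inr ` V. (\<Sum>w\<in>V. Mmat r w * q w) \<le> 1) \<longleftrightarrow> (\<forall>v\<in>V. q v \<le> 1)"
    using inr by auto
  have b: "(\<forall>r\<in>Inl ` conflict_edges V N. (\<Sum>w\<in>V. Mmat r w * q w) \<le> 1) \<longleftrightarrow>
     (\<forall>u w. (u, w) \<in> conflict_edges V N \<longrightarrow> q u + q w \<le> 1)"
    using inl by auto
  show ?thesis
    unfolding feasible_def M_rows_def ball_Un a b by blast
qed

theorem theorem1:
  fixes P :: "('x \<times> int) pmf" and N :: "'x \<Rightarrow> 'x set"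
  assumes "finite (set_pmf P)"
    and "set_pmf P \<subseteq> UNIV \<times> {-1, 1}"
    and "\<And>x. N x \<noteq> {}"
  shows "\<exists>qs. feasible (set_pmf P) N qs \<and>
           (\<forall>q. feasible (set_pmf P) N q \<longrightarrow> objective P qs \<le> objective P q) \<and>
           (\<exists>hs. soft_classifier hs \<and>
              (\<forall>v\<in>set_pmf P. qh N hs v \<ge> qs v) \<and>
              expected_rloss P N hs = objective P qs \<and>
              (\<forall>h. soft_classifier h \<longrightarrow> objective P qs \<le> expected_rloss P N h))"
proof -
  define V where "V = set_pmf P"
  define E where "E = conflict_edges V N"
  define p where "p = pmf P"
  have fin: "finite V" using assms(1) V_def by simp
  have lab: "V \<subseteq> UNIV \<times> {-1, 1}" using assms(2) V_def by simp
  have ppos: "\<And>v. v \<in> V \<Longrightarrow> 0 < p v" by (simp add: V_def p_def pmf_positive)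
  have p1: "\<And>v. p v \<le> 1" by (simp add: p_def pmf_le_1)
  have feas: "\<And>q. feasible V N q \<longleftrightarrow> (\<forall>v\<in>V. 0 \<le> q v) \<and> (\<forall>v\<in>V. q v \<le> 1) \<and>
     (\<forall>u w. (u, w) \<in> E \<longrightarrow> q u + q w \<le> 1)"
    using feasible_iff[OF fin lab] E_def by simp
  have obj: "\<And>q. objective P q = (\<Sum>v\<in>V. ereal (p v) * neglog (q v))"
    by (simp add: objective_def V_def p_def)
  have objpos: "objective P q = ereal (\<Sum>v\<in>V. p v * - ln (q v))"
    if "\<forall>v\<in>V. 0 < q v" for q
  proof -
    have "objective P q = (\<Sum>v\<in>V. ereal (p v * - ln (q v)))"
      unfolding obj by (rule sum.cong) (use that in \<open>auto simp: neglog_pos\<close>)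
    then show ?thesis by (simp add: sum_ereal)
  qed
  define f where "f q = (\<Sum>v\<in>V. p v * - ln (q v))" for q :: "'x \<times> int \<Rightarrow> real"
  define c0 where "c0 = (\<Sum>v\<in>V. p v * ln 2)"
  define \<delta> where "\<delta> v = min (1/2) (exp (- c0 / p v))" for v
  have \<delta>pos: "\<And>v. 0 < \<delta> v" by (simp add: \<delta>_def)
  define S where "S v = (if v \<in> V then {\<delta> v..1} else {0::real})" for v
  define K where "K = Pi\<^sub>E UNIV S \<inter> (\<Inter>e\<in>E. {q. q (fst e) + q (snd e) \<le> 1})"
  define q0 where "q0 w = (if w \<in> V then 1/2 else 0::real)" for w
  have q0K: "q0 \<in> K"
    unfolding K_def S_def q0_def by (auto simp: \<delta>_def E_def conflict_edges_def)
  have Kmem: "q \<in> K \<longleftrightarrow> (\<forall>v\<in>V. \<delta> v \<le> q v \<and> q v \<le> 1) \<and> (\<forall>w. w \<notin> V \<longrightarrow> q w = 0) \<and>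
     (\<forall>u w. (u, w) \<in> E \<longrightarrow> q u + q w \<le> 1)" for q
  proof -
    have 1: "q \<in> Pi\<^sub>E UNIV S \<longleftrightarrow> (\<forall>w. q w \<in> S w)" by (auto simp: PiE_def Pi_def)
    have 2: "(\<forall>w. q w \<in> S w) \<longleftrightarrow> (\<forall>v\<in>V. \<delta> v \<le> q v \<and> q v \<le> 1) \<and> (\<forall>w. w \<notin> V \<longrightarrow> q w = 0)"
      unfolding S_def by (auto split: if_splits)
    have 3: "q \<in> (\<Inter>e\<in>E. {q. q (fst e) + q (snd e) \<le> 1}) \<longleftrightarrow>
       (\<forall>u w. (u, w) \<in> E \<longrightarrow> q u + q w \<le> 1)" by auto
    show ?thesis unfolding K_def Int_iff 1 2 3 by blast
  qed
  have compK: "compact K"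
  proof -
    have "compact (Pi\<^sub>E UNIV S)"
    proof -
      have "compactin (product_topology (\<lambda>i. euclidean) UNIV) (Pi\<^sub>E UNIV S)"
        unfolding compactin_PiE by (auto simp: S_def)
      then show ?thesis by (simp add: euclidean_product_topology)
    qed
    moreover have "closed (\<Inter>e\<in>E. {q::'x \<times> int \<Rightarrow> real. q (fst e) + q (snd e) \<le> 1})"
    proof -
      have cl: "closed {q::'x \<times> int \<Rightarrow> real. q (fst e) + q (snd e) \<le> 1}" for e :: "('x \<times> int) \<times> ('x \<times> int)"
      proof -
        have "continuous_on UNIV (\<lambda>q::'x \<times> int \<Rightarrow> real. q (fst e) + q (snd e))"
          by (intro continuous_on_add continuous_on_product_coordinates)
        then show ?thesis by (rule closed_Collect_le) (rule continuous_on_const)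
      qed
      show ?thesis by (rule closed_INT, intro ballI, rule cl)
    qed
    ultimately show ?thesis unfolding K_def by (rule compact_Int_closed)
  qed
  have cv: "continuous_on K (\<lambda>q::'x \<times> int \<Rightarrow> real. q v)" for v
    by (rule continuous_on_subset[OF continuous_on_product_coordinates]) simp
  have Kpos: "0 < q v" if "q \<in> K" "v \<in> V" for q v
  proof -
    have "\<delta> v \<le> q v" using that unfolding Kmem by blast
    then show ?thesis using \<delta>pos[of v] by linarith
  qed
  have contf: "continuous_on K f"
    unfolding f_def
  proof (rule continuous_on_sum)
    fix v assume v: "v \<in> V"
    have nz: "\<forall>q\<in>K. q v \<noteq> 0"
    proof
      fix q :: "'x \<times> int \<Rightarrow> real" assume "q \<in> K"
      from Kpos[OF this v] show "q v \<noteq> 0" by simp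
    qed
    have "continuous_on K (\<lambda>q::'x \<times> int \<Rightarrow> real. ln (q v))"
      by (rule continuous_on_ln[OF cv nz])
    then show "continuous_on K (\<lambda>q::'x \<times> int \<Rightarrow> real. p v * - ln (q v))"
      by (intro continuous_on_mult continuous_on_const continuous_on_minus)
  qed
  obtain qs where qsK: "qs \<in> K" and qsmin: "\<And>q. q \<in> K \<Longrightarrow> f qs \<le> f q"
  proof -
    have "K \<noteq> {}" using q0K by blast
    from continuous_attains_inf[OF compK this contf] show ?thesis using that by blast
  qed
  have qs_prop: "\<forall>v\<in>V. \<delta> v \<le> qs v \<and> qs v \<le> 1" "\<forall>u w. (u, w) \<in> E \<longrightarrow> qs u + qs w \<le> 1"
    using qsK unfolding Kmem by auto
  have qspos: "\<forall>v\<in>V. 0 < qs v" using qs_prop(1) \<delta>pos by (meson order_less_le_trans)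
  have qsfeas: "feasible V N qs"
    unfolding feas using qs_prop qspos by (auto simp: less_imp_le)
  have objqs: "objective P qs = ereal (f qs)" using objpos[OF qspos] f_def by simp
  have fq0: "f q0 = c0"
  proof -
    have l: "ln (1/2::real) = - ln 2" using ln_div[of 1 2] by simp
    show ?thesis unfolding f_def c0_def q0_def by (rule sum.cong) (simp_all add: l)
  qed
  have qsopt: "objective P qs \<le> objective P q" if qf: "feasible V N q" for q
  proof (cases "ereal c0 \<le> objective P q")
    case True
    have "objective P qs \<le> ereal (f q0)" using objqs qsmin[OF q0K] by simp
    then show ?thesis using True fq0 by simp
  next
    case False
    then have lt: "objective P q < ereal c0" by simp
    have q01: "\<forall>v\<in>V. 0 \<le> q v \<and> q v \<le> 1" using qf unfolding feas by auto
    have termnn: "\<And>v. v \<in> V \<Longrightarrow> 0 \<le> ereal (p v) * neglog (q v)"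
      using q01 ppos by (simp add: neglog_nonneg less_imp_le)
    have qbig: "\<delta> v \<le> q v \<and> 0 < q v" if v: "v \<in> V" for v
    proof -
      have "ereal (p v) * neglog (q v) \<le> objective P q"
      proof -
        have "objective P q = ereal (p v) * neglog (q v) + (\<Sum>w\<in>V - {v}. ereal (p w) * neglog (q w))"
          unfolding obj by (rule sum.remove[OF fin v])
        moreover have "0 \<le> (\<Sum>w\<in>V - {v}. ereal (p w) * neglog (q w))"
          by (rule sum_nonneg) (use termnn in blast)
        ultimately show ?thesis by (simp add: add_increasing2)
      qed
      with lt have tl: "ereal (p v) * neglog (q v) < ereal c0" by simp
      have qp: "0 < q v"
      proof (rule ccontr)
        assume "\<not> 0 < q v"
        then have "neglog (q v) = \<infinity>" by (simp add: neglog_def)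
        then show False using tl ppos[OF v] by simp
      qed
      then have "p v * - ln (q v) < c0" using tl by (simp add: neglog_pos)
      then have "- ln (q v) < c0 / p v" using ppos[OF v] by (simp add: field_simps)
      then have "- c0 / p v < ln (q v)" by simp
      then have "exp (- c0 / p v) < q v" using qp
        by (metis exp_less_cancel_iff exp_ln)
      then show ?thesis using qp by (simp add: \<delta>_def)
    qed
    define q' where "q' w = (if w \<in> V then q w else 0)" for w
    have "q' \<in> K" unfolding Kmem q'_def using qbig q01 qf unfolding feas
      by (auto simp: E_def conflict_edges_def)
    then have "f qs \<le> f q'" by (rule qsmin)
    also have "f q' = f q" unfolding f_def q'_def by simp
    finally have "ereal (f qs) \<le> ereal (f q)" by simp
    moreover have "objective P q = ereal (f q)" using objpos qbig f_def by simp
    ultimately show ?thesis using objqs by simp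
  qed
  have lower: "objective P qs \<le> expected_rloss P N h" if h: "soft_classifier h" for h
  proof -
    define r where "r v = rloss N h v" for v
    define q where "q v = (if r v = \<infinity> then 0 else exp (- real_of_ereal (r v)))" for v
    have hb: "\<And>x y. y \<in> {-1, 1} \<Longrightarrow> 0 \<le> h x y \<and> h x y \<le> 1"
      using h unfolding soft_classifier_def by auto
    have key: "q v \<le> h x' (snd v)" "neglog (q v) = r v"
      if v: "v \<in> V" and x': "x' \<in> N (fst v)" for v x'
    proof -
      have y: "snd v \<in> {-1, 1}" using v lab by auto
      have up: "neglog (h x' (snd v)) \<le> r v"
        unfolding r_def rloss_def by (rule SUP_upper[OF x'])
      have rnn: "0 \<le> r v"
        using up neglog_nonneg[of "h x' (snd v)"] hb[OF y] by (meson order_trans)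
      show "q v \<le> h x' (snd v)"
      proof (cases "r v = \<infinity>")
        case True then show ?thesis using hb[OF y] by (simp add: q_def)
      next
        case False
        then obtain t where t: "r v = ereal t" using rnn by (cases "r v") auto
        have hp: "0 < h x' (snd v)"
        proof (rule ccontr)
          assume "\<not> 0 < h x' (snd v)"
          then have "neglog (h x' (snd v)) = \<infinity>" by (simp add: neglog_def)
          then show False using up t by simp
        qed
        then have "- ln (h x' (snd v)) \<le> t" using up t by (simp add: neglog_pos)
        then have "exp (- t) \<le> exp (ln (h x' (snd v)))" by simp
        then show ?thesis using hp t by (simp add: q_def)
      qed
      show "neglog (q v) = r v"
      proof (cases "r v = \<infinity>")
        case True then show ?thesis by (simp add: q_def neglog_def)
      next
        case False
        then obtain t where t: "r v = ereal t" using rnn by (cases "r v") auto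
        then show ?thesis by (simp add: q_def neglog_def)
      qed
    qed
    have qfeas: "feasible V N q"
      unfolding feas
    proof (intro conjI ballI allI impI)
      fix v assume "v \<in> V" then show "0 \<le> q v" by (simp add: q_def)
    next
      fix v assume v: "v \<in> V"
      obtain x' where x': "x' \<in> N (fst v)" using assms(3) by blast
      have y: "snd v \<in> {-1, 1}" using v lab by auto
      show "q v \<le> 1" using key(1)[OF v x'] hb[OF y, of x'] by linarith
    next
      fix u w assume "(u, w) \<in> E"
      then have uw: "u \<in> V" "w \<in> V" "snd u = 1" "snd w = -1" "N (fst u) \<inter> N (fst w) \<noteq> {}"
        by (auto simp: E_def conflict_edges_def)
      then obtain x' where xu: "x' \<in> N (fst u)" and xw: "x' \<in> N (fst w)" by blast
      have "q u \<le> h x' 1" using key(1)[OF uw(1) xu] uw(3) by simp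
      moreover have "q w \<le> h x' (-1)" using key(1)[OF uw(2) xw] uw(4) by simp
      moreover have "h x' 1 + h x' (-1) = 1" using h unfolding soft_classifier_def by auto
      ultimately show "q u + q w \<le> 1" by simp
    qed
    have "objective P q = expected_rloss P N h"
      unfolding obj expected_rloss_def V_def[symmetric] p_def[symmetric]
    proof (rule sum.cong)
      fix v assume v: "v \<in> V"
      obtain x' where x': "x' \<in> N (fst v)" using assms(3) by blast
      show "ereal (p v) * neglog (q v) = ereal (p v) * rloss N h v"
        using key(2)[OF v x'] r_def by simp
    qed simp
    then show ?thesis using qsopt[OF qfeas] by simp
  qed
  define A where "A x = qs ` {u \<in> V. snd u = 1 \<and> x \<in> N (fst u)}" for x
  define m where "m x = Max (insert 0 (A x))" for x
  define hs where "hs x y = (if y = 1 then m x else 1 - m x)" for x and y :: int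
  have finA: "\<And>x. finite (insert 0 (A x))" using fin by (simp add: A_def)
  have m0: "\<And>x. 0 \<le> m x" unfolding m_def using finA by simp
  have m1: "\<And>x. m x \<le> 1" unfolding m_def using finA qs_prop(1) by (auto simp: A_def)
  have hs_soft: "soft_classifier hs"
    unfolding soft_classifier_def hs_def using m0 m1 by simp
  have hs_ge: "qs v \<le> hs x' (snd v)" if v: "v \<in> V" and x': "x' \<in> N (fst v)" for v x'
  proof -
    have "snd v = 1 \<or> snd v = -1" using v lab by auto
    then show ?thesis
    proof
      assume y: "snd v = 1"
      have "qs v \<in> insert 0 (A x')" using v x' y by (auto simp: A_def)
      then have "qs v \<le> m x'" unfolding m_def using finA by simp
      then show ?thesis using y by (simp add: hs_def)
    next
      assume y: "snd v = -1"
      have "m x' \<le> 1 - qs v" unfolding m_def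
      proof (rule Max.boundedI[OF finA])
        show "insert 0 (A x') \<noteq> {}" by simp
      next
        fix a assume a: "a \<in> insert 0 (A x')"
        show "a \<le> 1 - qs v"
        proof (cases "a = 0")
          case True then show ?thesis using qs_prop(1) v by auto
        next
          case False
          then have "a \<in> A x'" using a by simp
          then obtain u where u: "u \<in> V" "snd u = 1" "x' \<in> N (fst u)" "a = qs u"
            by (auto simp: A_def)
          have "(u, v) \<in> E" using u v y x' by (auto simp: E_def conflict_edges_def)
          then have "qs u + qs v \<le> 1" using qs_prop(2) by blast
          then show ?thesis using u(4) by simp
        qed
      qed
      then show ?thesis using y by (simp add: hs_def)
    qed
  qed
  have hs_qh: "\<forall>v\<in>V. qh N hs v \<ge> qs v"
    unfolding qh_def using hs_ge assms(3) by (auto intro!: cINF_greatest)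
  have upper: "expected_rloss P N hs \<le> objective P qs"
    unfolding obj expected_rloss_def V_def[symmetric] p_def[symmetric]
  proof (rule sum_mono)
    fix v assume v: "v \<in> V"
    have "rloss N hs v \<le> neglog (qs v)"
      unfolding rloss_def by (rule SUP_least) (use hs_ge[OF v] neglog_antimono in blast)
    then show "ereal (p v) * rloss N hs v \<le> ereal (p v) * neglog (qs v)"
      using ppos[OF v] by (simp add: ereal_mult_left_mono less_imp_le)
  qed
  have eq: "expected_rloss P N hs = objective P qs"
    using upper lower[OF hs_soft] by (rule antisym)
  show ?thesis
    unfolding V_def[symmetric]
    using qsfeas qsopt hs_soft hs_qh eq lower by blast
qed

end
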